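(* Let $a,d$ be real numbers and let $T_n(t,a,d)$ be the general Eulerian polynomials defined below. Then, as an identity of formal power series in $u$ with coefficients in the field $\mathbb{R}(t)$ of rational functions in $t$, $$\sum_{n\ge 0}T_n(t,a,d)\frac{u^n}{n!}=\frac{(t-1)\exp(au(t-1))}{t-\exp(du(t-1))}.$$
   Context: For real numbers $a,d$, the general Eulerian numbers $A_{n,k}(a,d)$ (integers $n\ge 0$, $k$) are defined by $A_{0,-1}(a,d)=1$, $A_{n,k}(a,d)=0$ whenever $k\ge n$ or $k\le -2$, and for $n\ge 1$, $-1\le k\le n-1$: $$A_{n,k}(a,d)=(-a+(k+2)d)A_{n-1,k}(a,d)+(a+(n-k-1)d)A_{n-1,k-1}(a,d).$$ The general Eulerian polynomials are $T_n(t,a,d)=\sum_{k=-1}^{n-1}A_{n,k}(a,d)t^{k+1}$ (so $T_0(t,a,d)=1$). Note $t-\exp(du(t-1))$ has constant term $t-1\neq 0$ in $\mathbb{R}(t)[[u]]$, hence is invertible. *)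

theory Defs
  imports "HOL-Computational_Algebra.Computational_Algebra"
begin

fun genEulerA :: "real \<Rightarrow> real \<Rightarrow> nat \<Rightarrow> int \<Rightarrow> real" where
  "genEulerA a d 0 k = (if k = -1 then 1 else 0)"
| "genEulerA a d (Suc n) k =
     (if k \<ge> int (Suc n) \<or> k \<le> -2 then 0
      else (- a + (of_int k + 2) * d) * genEulerA a d n k
         + (a + (of_int (int (Suc n) - k - 1)) * d) * genEulerA a d n (k - 1))"

definition genEulerT :: "real \<Rightarrow> real \<Rightarrow> nat \<Rightarrow> real poly" where
  "genEulerT a d n = (\<Sum>k\<in>{-1..int n - 1}. monom (genEulerA a d n k) (nat (k + 1)))"

text \<open>The field R(t) of rational functions is modelled as real poly fract; tvar is t.\<close>
definition tvar :: "real poly fract" where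
  "tvar = to_fract [:0, 1:]"

definition rconst :: "real \<Rightarrow> real poly fract" where
  "rconst c = to_fract [:c:]"

end

theory Submission
  imports Defs
begin

definition PP :: "real \<Rightarrow> real \<Rightarrow> nat \<Rightarrow> real fps" where
  "PP c d n = Abs_fps (\<lambda>m. (c + of_nat m * d) ^ n)"

definition QQ :: "real \<Rightarrow> real \<Rightarrow> nat \<Rightarrow> real fps" where
  "QQ c d n = (1 - fps_X) ^ (n + 1) * PP c d n"

lemma PP_Suc: "PP c d (Suc n) = fps_const c * PP c d n + fps_const d * (fps_X * fps_deriv (PP c d n))"
  unfolding fps_mult_fps_X_deriv_shift
  by (rule fps_ext) (simp add: PP_def algebra_simps)


lemma dY: "fps_deriv ((1 - fps_X :: real fps) ^ (n+1)) = - (of_nat n + 1) * (1 - fps_X) ^ n"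
proof (induction n)
  case 0 then show ?case by simp
next
  case (Suc n)
  have "fps_deriv ((1 - fps_X :: real fps) ^ (Suc n+1)) = fps_deriv ((1 - fps_X) * (1 - fps_X :: real fps) ^ (n+1))"
    by simp
  also have "\<dots> = - ((1 - fps_X) ^ (n+1)) + (1 - fps_X) * (- (of_nat n + 1) * (1 - fps_X) ^ n)"
    by (simp only: fps_deriv_mult Suc) simp
  finally show ?case by (simp add: algebra_simps)
qed

lemma alg: fixes C D N X Y P P' Yn :: "'a::comm_ring_1" assumes "X = 1 - Y" shows
 "Yn*Y*Y*(C*P + D*(X*P')) = (C + (D - C + N*D)*X)*(Yn*Y*P) + D*X*Y*(Yn*Y*P' - (N+1)*Yn*P)"
  unfolding assms by (simp add: algebra_simps)

lemma QQ_Suc: "QQ c d (Suc n) = (fps_const c + fps_const (d - c + of_nat n * d) * fps_X) * QQ c d n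
   + fps_const d * fps_X * (1 - fps_X) * fps_deriv (QQ c d n)"
proof -
  define Y :: "real fps" where "Y = 1 - fps_X"
  have X: "fps_X = 1 - Y" by (simp add: Y_def)
  define P where "P = PP c d n"
  define P' where "P' = fps_deriv P"
  have dY: "fps_deriv (Y ^ (n+1)) = - (of_nat n + 1) * Y ^ n"
    unfolding Y_def by (rule dY)
  have q1: "QQ c d (Suc n) = Y^n * Y * Y * (fps_const c * P + fps_const d * (fps_X * P'))"
    by (simp add: QQ_def PP_Suc P_def P'_def Y_def algebra_simps)
  have q2: "fps_deriv (QQ c d n) = Y^n * Y * P' - (of_nat n + 1) * Y^n * P"
    unfolding QQ_def P_def[symmetric] P'_def Y_def[symmetric] fps_deriv_mult dY
    by (simp add: algebra_simps)
  have q3: "QQ c d n = Y^n*Y*P" by (simp add: QQ_def P_def Y_def)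
  have q4: "fps_const (d - c + real n * d) = fps_const d - fps_const c + of_nat n * fps_const d"
    by (simp add: fps_of_nat[symmetric])
  show ?thesis
    unfolding q1 q2 q4 Y_def[symmetric] unfolding q3
    by (rule alg[OF X])
qed

lemma QQ_nth_0: "QQ c d (Suc n) $ 0 = c * QQ c d n $ 0"
  by (subst QQ_Suc) (simp add: algebra_simps fps_X_mult_nth)

lemma QQ_nth_Suc: "QQ c d (Suc n) $ Suc i = (c + (of_nat i + 1) * d) * QQ c d n $ Suc i
   + (d - c + of_nat n * d - of_nat i * d) * QQ c d n $ i"
proof -
  have e: "fps_const d * fps_X * (1 - fps_X) * fps_deriv (QQ c d n) =
    fps_const d * (fps_X * fps_deriv (QQ c d n)) - fps_const d * (fps_X * (fps_X * fps_deriv (QQ c d n)))"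
    by (simp add: algebra_simps)
  show ?thesis
    apply (subst QQ_Suc)
    unfolding distrib_right e
    apply (simp only: fps_add_nth fps_sub_nth fps_mult_fps_X_deriv_shift)
    apply (simp add: fps_X_mult_nth mult.assoc algebra_simps)
    done
qed
lemma QQ_0_nth: "QQ c d 0 $ j = (if j = 0 then 1 else 0)"
proof -
  have "QQ c d 0 = Abs_fps (\<lambda>_. 1) - fps_X * Abs_fps (\<lambda>_. 1)"
    by (simp add: QQ_def PP_def algebra_simps)
  then show ?thesis by (simp add: fps_X_mult_nth)
qed

lemma A_QQ: "(\<forall>k. genEulerA a d n k = (if k \<ge> -1 then QQ (d-a) d n $ nat (k+1) else 0))
   \<and> (\<forall>j>n. QQ (d-a) d n $ j = 0)"
proof (induction n)
  case 0
  show ?case by (auto simp: QQ_0_nth)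
next
  case (Suc n)
  have IH: "\<And>k. genEulerA a d n k = (if k \<ge> -1 then QQ (d-a) d n $ nat (k+1) else 0)"
    and deg: "\<And>j. j > n \<Longrightarrow> QQ (d-a) d n $ j = 0" using Suc by auto
  have deg': "QQ (d-a) d (Suc n) $ j = 0" if jn: "j > Suc n" for j
  proof -
    obtain i where i: "j = Suc i" using jn by (cases j) auto
    show ?thesis using jn deg[of i] deg[of "Suc i"] by (simp add: i QQ_nth_Suc)
  qed
  have A: "genEulerA a d (Suc n) k = (if k \<ge> -1 then QQ (d-a) d (Suc n) $ nat (k+1) else 0)" for k
  proof (cases "k \<le> -2")
    case True then show ?thesis by simp
  next
    case False
    show ?thesis
    proof (cases "k = -1")
      case True
      then show ?thesis proof -
        have "genEulerA a d (Suc n) (-1) = (- a + (of_int (-1) + 2) * d) * genEulerA a d n (-1)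
         + (a + (of_int (int (Suc n) - (-1) - 1)) * d) * genEulerA a d n (-1 - 1)"
          by (simp only: genEulerA.simps) simp
        also have "\<dots> = (d - a) * QQ (d-a) d n $ 0"
          using IH[of "-1"] IH[of "-2"] by simp
        finally show ?thesis using True by (simp add: QQ_nth_0)
      qed
    next
      case False
      with \<open>\<not> k \<le> -2\<close> have "k \<ge> 0" by simp
      then obtain i where k: "k = int i" using nonneg_int_cases by blast
      show ?thesis
      proof (cases "i \<ge> Suc n")
        case True
        have e1: "nat (int i + 1) = Suc i" by simp
        then show ?thesis using True deg'[of "Suc i"] by (simp add: k)
      next
        case False
        have e1: "nat (int i + 1) = Suc i" by simp
        have "genEulerA a d (Suc n) k = (- a + (real i + 2) * d) * QQ (d-a) d n $ Suc i
            + (a + real_of_int (int (Suc n) - int i - 1) * d) * QQ (d-a) d n $ i"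
          using False IH[of "int i"] IH[of "int i - 1"] by (simp add: k e1)
        also have "\<dots> = QQ (d-a) d (Suc n) $ Suc i"
          by (simp add: QQ_nth_Suc algebra_simps of_nat_diff)
        finally show ?thesis by (simp add: k e1)
      qed
    qed
  qed
  show ?case using A deg' by blast
qed


lemma T_coeff: "coeff (genEulerT a d n) j = QQ (d-a) d n $ j"
proof -
  have "coeff (genEulerT a d n) j = (\<Sum>k\<in>{-1..int n - 1}. if k = int j - 1 then genEulerA a d n k else 0)"
    unfolding genEulerT_def coeff_sum coeff_monom by (intro sum.cong) auto
  also have "\<dots> = (if int j - 1 \<in> {-1..int n - 1} then genEulerA a d n (int j - 1) else 0)"
    by (rule sum.delta) simp
  also have "\<dots> = QQ (d-a) d n $ j"
    using A_QQ[of a d n] by auto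
  finally show ?thesis .
qed

lemma T_fps: "fps_of_poly (genEulerT a d n) = QQ (d-a) d n"
  by (rule fps_ext) (simp add: T_coeff)

lemma S_id: "fps_X * PP c d n - (\<Sum>i\<le>n. fps_const (of_nat (n choose i) * (-d)^(n-i)) * PP c d i)
   = fps_const (- ((c - d)^n))"
proof (rule fps_ext)
  fix m
  have b: "(c + real m * d + (- d))^n = (\<Sum>i\<le>n. of_nat (n choose i) * (-d)^(n-i) * (c + real m * d)^i)"
    unfolding binomial_ring by (intro sum.cong) (auto simp: algebra_simps)
  show "(fps_X * PP c d n - (\<Sum>i\<le>n. fps_const (of_nat (n choose i) * (-d)^(n-i)) * PP c d i)) $ m
     = fps_const (- ((c - d)^n)) $ m"
  proof (cases m)
    case 0 then show ?thesis using b by (simp add: fps_X_mult_nth fps_sum_nth PP_def)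
  next
    case (Suc m') then show ?thesis using b by (simp add: fps_X_mult_nth fps_sum_nth PP_def algebra_simps)
  qed
qed

lemma star_fps: "fps_X * QQ c d n - (\<Sum>i\<le>n. fps_const (of_nat (n choose i)) * QQ c d i * (fps_const d * (fps_X - 1))^(n-i))
   = (fps_X - 1)^(n+1) * fps_const ((d - c)^n)"
proof -
  define Y :: "real fps" where "Y = 1 - fps_X"
  have DX: "fps_const d * (fps_X - 1) = fps_const (-d) * Y" by (simp add: Y_def algebra_simps)
  have t: "fps_const (of_nat (n choose i)) * QQ c d i * (fps_const d * (fps_X - 1))^(n-i)
     = Y^(n+1) * (fps_const (of_nat (n choose i) * (-d)^(n-i)) * PP c d i)" if "i \<in> {..n}" for i
  proof -
    have "Y^n = Y^i * Y^(n-i)" using that by (simp flip: power_add)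
    then show ?thesis unfolding DX QQ_def Y_def[symmetric] power_mult_distrib
      by (simp add: algebra_simps flip: fps_const_power fps_const_mult)
  qed
  have "fps_X * QQ c d n - (\<Sum>i\<le>n. fps_const (of_nat (n choose i)) * QQ c d i * (fps_const d * (fps_X - 1))^(n-i))
      = Y^(n+1) * (fps_X * PP c d n - (\<Sum>i\<le>n. fps_const (of_nat (n choose i) * (-d)^(n-i)) * PP c d i))"
  proof -
    have "(\<Sum>i\<le>n. fps_const (of_nat (n choose i)) * QQ c d i * (fps_const d * (fps_X - 1))^(n-i))
       = (\<Sum>i\<le>n. Y^(n+1) * (fps_const (of_nat (n choose i) * (-d)^(n-i)) * PP c d i))"
      by (rule sum.cong[OF refl t])
    also have "\<dots> = Y^(n+1) * (\<Sum>i\<le>n. fps_const (of_nat (n choose i) * (-d)^(n-i)) * PP c d i)"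
      by (simp add: sum_distrib_left)
    finally show ?thesis by (simp add: QQ_def Y_def[symmetric] algebra_simps)
  qed
  also have "\<dots> = Y^(n+1) * fps_const (- ((c - d)^n))" by (simp only: S_id)
  also have "Y^(n+1) = fps_const ((-1)^(n+1)) * (fps_X - 1)^(n+1)"
  proof -
    have "Y = fps_const (-1) * (fps_X - 1)" unfolding Y_def by (simp add: algebra_simps)
    then show ?thesis by (simp only: power_mult_distrib fps_const_power)
  qed
  also have "fps_const ((-1)^(n+1)) * (fps_X - 1)^(n+1) * fps_const (- ((c - d)^n)) =
     (fps_X - 1)^(n+1) * (fps_const ((-1)^(n+1) * (- ((c - d)^n))))"
    by (simp only: fps_const_mult[symmetric] ac_simps)
  also have "(-1::real)^(n+1) * (- ((c - d)^n)) = (d - c)^n"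
  proof -
    have "(d - c)^n = ((-1) * (c - d))^n" by simp
    also have "\<dots> = (-1)^n * (c - d)^n" by (rule power_mult_distrib)
    finally show ?thesis by simp
  qed
  finally show ?thesis .
qed


lemma star_poly: "[:0,1:] * genEulerT a d n - (\<Sum>i\<le>n. [:of_nat (n choose i):] * genEulerT a d i * ([:d:] * ([:0,1:] - 1))^(n-i))
   = ([:0,1:] - 1)^(n+1) * [:a:]^n"
proof -
  have "fps_of_poly ([:0,1:] * genEulerT a d n - (\<Sum>i\<le>n. [:of_nat (n choose i):] * genEulerT a d i * ([:d:] * ([:0,1:] - 1))^(n-i)))
     = fps_of_poly (([:0,1:] - 1)^(n+1) * [:a:]^n)"
    using star_fps[of "d-a" d n]
    by (simp only: fps_of_poly_diff fps_of_poly_mult fps_of_poly_sum fps_of_poly_power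
        fps_of_poly_const fps_of_poly_fps_X fps_of_poly_1 T_fps fps_const_power) simp
  then show ?thesis by (simp only: fps_of_poly_eq_iff)
qed

lemma to_fract_power: "to_fract (p^n) = to_fract p ^ n"
  by (induction n) simp_all

lemma to_fract_of_nat: "to_fract (of_nat m) = of_nat m"
  by (induction m) simp_all

lemma star_fract: "tvar * to_fract (genEulerT a d n) - (\<Sum>i\<le>n. of_nat (n choose i) * to_fract (genEulerT a d i) * (rconst d * (tvar - 1))^(n-i))
   = (tvar - 1)^(n+1) * rconst a ^ n"
proof -
  have "to_fract ([:0,1:] * genEulerT a d n - (\<Sum>i\<le>n. [:of_nat (n choose i):] * genEulerT a d i * ([:d:] * ([:0,1:] - 1))^(n-i)))
     = to_fract (([:0,1:] - 1)^(n+1) * [:a:]^n)"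
    using star_poly by (rule arg_cong)
  moreover have e: "\<And>m. to_fract [:of_nat m:] = (of_nat m :: real poly fract)"
    by (simp only: of_nat_poly[symmetric] to_fract_of_nat)
  ultimately show ?thesis unfolding tvar_def rconst_def
    by (simp only: to_fract_diff to_fract_mult to_fract_sum to_fract_power to_fract_1 e)
qed

theorem lemma3p3:
  fixes a d :: real
  shows "Abs_fps (\<lambda>n. to_fract (genEulerT a d n) / of_nat (fact n))
       = (fps_const (tvar - 1) * fps_exp (rconst a * (tvar - 1)))
         / (fps_const tvar - fps_exp (rconst d * (tvar - 1)))"
proof -
  define L where "L = Abs_fps (\<lambda>n. to_fract (genEulerT a d n) / of_nat (fact n))"
  define C where "C = fps_const tvar - fps_exp (rconst d * (tvar - 1))"
  define B where "B = fps_const (tvar - 1) * fps_exp (rconst a * (tvar - 1))"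
  define x where "x = rconst d * (tvar - 1)"
  have t1: "tvar - 1 \<noteq> 0"
  proof
    assume "tvar - 1 = 0"
    then have "to_fract [:0,1::real:] = to_fract 1" by (simp add: tvar_def)
    then have "[:0,1::real:] = 1" by (simp only: to_fract_eq_iff)
    then show False by (simp add: one_pCons)
  qed
  have C0: "C $ 0 \<noteq> 0" using t1 by (simp add: C_def)
  then have Cn0: "C \<noteq> 0" by auto
  have LC: "L * C = B"
  proof (rule fps_ext)
    fix n
    have f: "(of_nat (fact k) :: real poly fract) \<noteq> 0" for k by simp
    have S: "(\<Sum>i=0..n. L $ i * fps_exp x $ (n - i))
       = (\<Sum>i\<le>n. of_nat (n choose i) * to_fract (genEulerT a d i) * x^(n-i)) / of_nat (fact n)"
      unfolding sum_divide_distrib atLeast0AtMost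
    proof (rule sum.cong[OF refl])
      fix i assume "i \<in> {..n}"
      then have i: "i \<le> n" by simp
      show "L $ i * fps_exp x $ (n - i) = of_nat (n choose i) * to_fract (genEulerT a d i) * x^(n-i) / of_nat (fact n)"
        unfolding binomial_fact[OF i] L_def fps_exp_nth using f[of n] f[of i] f[of "n-i"]
        by (simp add: field_simps)
    qed
    have "(L * C) $ n = L $ n * tvar - (\<Sum>i=0..n. L $ i * fps_exp x $ (n - i))"
    proof -
      have "L * C = L * fps_const tvar - L * fps_exp x" by (simp add: C_def x_def algebra_simps)
      then show ?thesis by (simp only: fps_sub_nth fps_mult_right_const_nth fps_mult_nth[of L "fps_exp x"])
    qed
    also have "\<dots> = (tvar * to_fract (genEulerT a d n) - (\<Sum>i\<le>n. of_nat (n choose i) * to_fract (genEulerT a d i) * x^(n-i))) / of_nat (fact n)"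
      unfolding S by (simp add: L_def field_simps)
    also have "\<dots> = (tvar - 1)^(n+1) * rconst a ^ n / of_nat (fact n)"
      unfolding x_def star_fract ..
    also have "\<dots> = B $ n"
      by (simp add: B_def fps_exp_nth power_mult_distrib mult.commute mult.left_commute)
    finally show "(L * C) $ n = B $ n" .
  qed
  have "L = L * C / C" using Cn0 by simp
  then have "L = B / C" using LC by simp
  then show ?thesis unfolding L_def B_def C_def .
qed

end
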